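(* For integers $k\ge 0$, $n\ge1$, and variables $\lambda_1,\dots,\lambda_n$, let $$p_k(\lambda_1,\dots,\lambda_n)=(1-\lambda_1)\cdots(1-\lambda_n)\sum_{\alpha\in\mathbb Z_{\ge0}^n,\ 0\le|\alpha|<k}\lambda^\alpha,$$ where $\lambda^\alpha=\lambda_1^{\alpha_1}\cdots\lambda_n^{\alpha_n}$ and $|\alpha|=\alpha_1+\dots+\alpha_n$. For nonnegative integers $m,n,\ell$ put $$a_{mn\ell}=p_m(q^n,q^{n+1},\dots,q^{n+\ell})\in\mathbb Z[q].$$ Then $a_{mn\ell}=a_{nm\ell}$. *)

theory Defs
  imports "HOL-Computational_Algebra.Polynomial"
begin

text \<open>Multi-indices alpha in Z_{>=0}^n are represented as lists of naturals of length n;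
  the variables lambda_1..lambda_n as a list of length n.\<close>

definition multi_indices :: "nat \<Rightarrow> nat \<Rightarrow> nat list set" where
  "multi_indices n k = {as. length as = n \<and> sum_list as < k}"

definition mono_pow :: "'a::comm_ring_1 list \<Rightarrow> nat list \<Rightarrow> 'a" where
  "mono_pow xs as = prod_list (map2 (\<lambda>x a. x ^ a) xs as)"

definition p_poly :: "nat \<Rightarrow> 'a::comm_ring_1 list \<Rightarrow> 'a" where
  "p_poly k xs = prod_list (map (\<lambda>x. 1 - x) xs) *
     (\<Sum>as\<in>multi_indices (length xs) k. mono_pow xs as)"

definition a_coeff :: "nat \<Rightarrow> nat \<Rightarrow> nat \<Rightarrow> int poly" where
  "a_coeff m n l = p_poly m (map (\<lambda>i. [:0, 1:] ^ (n + i)) [0..<Suc l])"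

end

theory Submission
  imports Defs
begin

fun T :: "'a::comm_ring_1 list \<Rightarrow> nat \<Rightarrow> 'a" where
  "T [] k = (if 0 < k then 1 else 0)"
| "T (x#xs) k = (\<Sum>j<k. x^j * T xs (k-j))"

fun E :: "'a::comm_ring_1 list \<Rightarrow> nat \<Rightarrow> 'a" where
  "E [] k = (if k = 0 then 1 else 0)"
| "E (x#xs) k = (\<Sum>j\<le>k. x^j * E xs (k-j))"

lemma mi_finite: "finite (multi_indices n k)"
proof -
  have "multi_indices n k \<subseteq> {xs. set xs \<subseteq> {..<k} \<and> length xs = n}"
    unfolding multi_indices_def using member_le_sum_list by fastforce
  moreover have "finite {xs. set xs \<subseteq> {..<k} \<and> length xs = n}"
    by (rule finite_lists_length_eq) simp
  ultimately show ?thesis by (rule finite_subset)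
qed

lemma mi_Suc: "multi_indices (Suc n) k
   = (\<lambda>(j,as). j#as) ` (SIGMA j:{..<k}. multi_indices n (k-j))"
proof
  show "multi_indices (Suc n) k \<subseteq> (\<lambda>(j,as). j#as) ` (SIGMA j:{..<k}. multi_indices n (k-j))"
  proof
    fix xs assume "xs \<in> multi_indices (Suc n) k"
    then obtain j bs where "xs = j#bs" "length bs = n" "j + sum_list bs < k"
      unfolding multi_indices_def by (cases xs) auto
    then show "xs \<in> (\<lambda>(j,as). j#as) ` (SIGMA j:{..<k}. multi_indices n (k-j))"
      unfolding multi_indices_def by (auto intro!: image_eqI[where x="(j,bs)"])
  qed
  show "(\<lambda>(j,as). j#as) ` (SIGMA j:{..<k}. multi_indices n (k-j)) \<subseteq> multi_indices (Suc n) k"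
    unfolding multi_indices_def by auto
qed

lemma mi_0: "multi_indices 0 k = (if 0<k then {[]} else {})"
  unfolding multi_indices_def by auto

lemma S_T: "(\<Sum>as\<in>multi_indices (length xs) k. mono_pow xs as) = T xs k"
proof (induction xs arbitrary: k)
  case Nil then show ?case by (simp add: mi_0 mono_pow_def)
next
  case (Cons x xs)
  have inj: "inj_on (\<lambda>(j,as). j#as) (SIGMA j:{..<k}. multi_indices (length xs) (k-j))"
    by (auto simp: inj_on_def)
  have "(\<Sum>as\<in>multi_indices (length (x#xs)) k. mono_pow (x#xs) as)
     = (\<Sum>(j,as)\<in>(SIGMA j:{..<k}. multi_indices (length xs) (k-j)). mono_pow (x#xs) (j#as))"
    unfolding length_Cons mi_Suc sum.reindex[OF inj] by (simp add: comp_def split_def)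
  also have "\<dots> = (\<Sum>j<k. \<Sum>as\<in>multi_indices (length xs) (k-j). x^j * mono_pow xs as)"
    by (subst sum.Sigma[symmetric]) (auto simp: mi_finite mono_pow_def)
  also have "\<dots> = (\<Sum>j<k. x^j * T xs (k-j))"
    by (simp add: sum_distrib_left[symmetric] Cons.IH)
  finally show ?case by simp
qed

lemma T0: "T xs 0 = 0" by (cases xs) auto

lemma E0: "E xs 0 = 1" by (induction xs) auto

lemma T_Suc: "T xs (Suc k) = T xs k + E xs k"
proof (induction xs arbitrary: k)
  case Nil then show ?case by simp
next
  case (Cons x xs)
  have "T (x#xs) (Suc k) = (\<Sum>j<Suc k. x^j * T xs (Suc (k-j)))"
    by (simp add: Suc_diff_le)
  also have "\<dots> = (\<Sum>j<Suc k. x^j * T xs (k-j)) + (\<Sum>j<Suc k. x^j * E xs (k-j))"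
    by (simp add: Cons.IH distrib_left sum.distrib)
  also have "(\<Sum>j<Suc k. x^j * T xs (k-j)) = T (x#xs) k"
    by (simp add: T0)
  also have "(\<Sum>j<Suc k. x^j * E xs (k-j)) = E (x#xs) k"
    by (simp add: lessThan_Suc_atMost)
  finally show ?case .
qed

lemma E_scale: "E (map ((*) c) xs) k = c^k * E xs k"
proof (induction xs arbitrary: k)
  case Nil then show ?case by simp
next
  case (Cons x xs)
  have "E (map ((*) c) (x#xs)) k = (\<Sum>j\<le>k. (c*x)^j * (c^(k-j) * E xs (k-j)))"
    by (simp add: Cons.IH)
  also have "\<dots> = (\<Sum>j\<le>k. c^k * (x^j * E xs (k-j)))"
  proof (rule sum.cong)
    fix j assume "j \<in> {..k}"
    then have "c^k = c^j * c^(k-j)" by (simp add: power_add[symmetric])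
    then show "(c*x)^j * (c^(k-j) * E xs (k-j)) = c^k * (x^j * E xs (k-j))"
      by (simp add: power_mult_distrib algebra_simps)
  qed simp
  also have "\<dots> = c^k * E (x#xs) k" by (simp add: sum_distrib_left)
  finally show ?case .
qed

lemma E_rec: "E (x#xs) (Suc k) = E xs (Suc k) + x * E (x#xs) k"
  unfolding E.simps sum.atMost_Suc_shift by (simp add: sum_distrib_left algebra_simps)

lemma E_single: "E [x] k = x^k"
  by (induction k) (auto simp: E0 E_rec simp del: E.simps(2))

definition Lst :: "'a::comm_ring_1 \<Rightarrow> nat \<Rightarrow> nat \<Rightarrow> 'a list" where
  "Lst q n L = map (\<lambda>i. q^(n+i)) [0..<L]"

lemma Lst_Suc: "Lst q n (Suc L) = q^n # Lst q (Suc n) L"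
  unfolding Lst_def by (simp add: upt_conv_Cons map_Suc_upt[symmetric] del: upt_Suc)

lemma Lst_shift: "Lst q (Suc n) L = map ((*) q) (Lst q n L)"
  unfolding Lst_def by simp

lemma E_Lst: "E (Lst q n L) k = q^(n*k) * E (Lst q 0 L) k"
  by (induction n) (simp_all add: Lst_shift E_scale power_add)


lemma key:
  fixes q :: "'a::comm_ring_1"
  shows "(\<Prod>i<L. 1 - q^(i+1)) * E (Lst q 0 (Suc L)) k = (\<Prod>i<L. 1 - q^(k+1+i))"
proof (induction L arbitrary: k)
  case 0
  then show ?case by (simp add: Lst_def E_single)
next
  case (Suc L)
  note outerIH = Suc.IH
  show ?case
  proof (induction k)
    case 0
    then show ?case by (simp add: E0)
  next
    case (Suc k)
    define X where "X = (\<Prod>i<L. 1 - q^(Suc k+1+i))"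
    have e: "E (Lst q 0 (Suc (Suc L))) (Suc k)
        = q^(Suc k) * E (Lst q 0 (Suc L)) (Suc k) + E (Lst q 0 (Suc (Suc L))) k"
    proof -
      have L: "Lst q 0 (Suc (Suc L)) = 1 # Lst q 1 (Suc L)" by (simp add: Lst_Suc)
      have "E (Lst q 0 (Suc (Suc L))) (Suc k)
         = E (Lst q 1 (Suc L)) (Suc k) + 1 * E (Lst q 0 (Suc (Suc L))) k"
        unfolding L by (rule E_rec)
      then show ?thesis using E_Lst[of q 1 "Suc L" "Suc k"] by simp
    qed
    have r1: "(\<Prod>i<Suc L. 1 - q^(k+1+i)) = (1 - q^(k+1)) * X"
      unfolding X_def prod.lessThan_Suc_shift by simp
    have r2: "(\<Prod>i<Suc L. 1 - q^(Suc k+1+i)) = X * (1 - q^(Suc k + 1 + L))"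
      unfolding X_def by simp
    have "(\<Prod>i<Suc L. 1 - q^(i+1)) * E (Lst q 0 (Suc (Suc L))) (Suc k)
       = q^(Suc k) * (1 - q^(L+1)) * ((\<Prod>i<L. 1 - q^(i+1)) * E (Lst q 0 (Suc L)) (Suc k))
         + (\<Prod>i<Suc L. 1 - q^(i+1)) * E (Lst q 0 (Suc (Suc L))) k"
      by (simp add: e algebra_simps)
    also have "\<dots> = q^(Suc k) * (1 - q^(L+1)) * X + (1 - q^(k+1)) * X"
      using outerIH[of "Suc k"] Suc.IH r1 X_def by simp
    also have "\<dots> = X * (1 - q^(Suc k + 1 + L))"
      by (simp add: power_add algebra_simps)
    finally show ?case using r2 by simp
  qed
qed

definition Pn :: "'a::comm_ring_1 \<Rightarrow> nat \<Rightarrow> nat \<Rightarrow> 'a" where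
  "Pn q l n = (\<Prod>i<Suc l. 1 - q^(n+i))"

definition Dm :: "'a::comm_ring_1 \<Rightarrow> nat \<Rightarrow> nat \<Rightarrow> nat \<Rightarrow> 'a" where
  "Dm q l m n = Pn q l n * E (Lst q n (Suc l)) m"

definition Am :: "'a::comm_ring_1 \<Rightarrow> nat \<Rightarrow> nat \<Rightarrow> nat \<Rightarrow> 'a" where
  "Am q l m n = Pn q l n * T (Lst q n (Suc l)) m"

lemma Am_Suc: "Am q l (Suc m) n = Am q l m n + Dm q l m n"
  unfolding Am_def Dm_def by (simp add: T_Suc algebra_simps)

lemma Am_0: "Am q l 0 n = 0" unfolding Am_def by (simp add: T0)

lemma Am_0': "Am q l m 0 = 0" unfolding Am_def Pn_def prod.lessThan_Suc_shift by simp

lemma D_ident: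
  fixes q :: "'a::comm_ring_1"
  shows "(\<Prod>i<l. 1 - q^(i+1)) * (Dm q l n m + Dm q l m (Suc n))
       = (\<Prod>i<l. 1 - q^(i+1)) * (Dm q l m n + Dm q l n (Suc m))"
proof -
  define R where "R k = (\<Prod>i<l. 1 - q^(k+1+i))" for k
  define Q where "Q = (\<Prod>i<l. 1 - q^(i+1))"
  have P1: "Pn q l k = (1 - q^k) * R k" for k
    unfolding Pn_def R_def prod.lessThan_Suc_shift by simp
  have P2: "Pn q l (Suc k) = R k * (1 - q^(Suc k + l))" for k
    unfolding Pn_def R_def by simp
  have QE: "Q * E (Lst q 0 (Suc l)) k = R k" for k
    unfolding Q_def R_def by (rule key)
  have QD: "Q * Dm q l m' n' = q^(n'*m') * Pn q l n' * R m'" for m' n'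
    unfolding Dm_def by (subst E_Lst) (simp add: QE[symmetric] algebra_simps)
  have d1: "Q * Dm q l n m = q^(n*m) * (1 - q^m) * (R n * R m)"
    using QD[of n m] P1[of m] by (simp add: algebra_simps)
  have d2: "Q * Dm q l m n = q^(n*m) * (1 - q^n) * (R n * R m)"
    using QD[of m n] P1[of n] by (simp add: algebra_simps)
  have e1: "q^(Suc n * m) = q^(n*m) * q^m" by (simp add: power_add)
  have e2: "q^(Suc n + l) = q^n * q^(Suc l)" by (simp add: power_add)
  have e3: "q^(Suc m * n) = q^(n*m) * q^n" by (simp add: power_add mult.commute)
  have e4: "q^(Suc m + l) = q^m * q^(Suc l)" by (simp add: power_add)
  have d3: "Q * Dm q l m (Suc n) = q^(n*m) * (q^m * (1 - q^n * q^(Suc l))) * (R n * R m)"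
    using QD[of m "Suc n", unfolded P2 e1 e2] by (simp only: mult_ac)
  have d4: "Q * Dm q l n (Suc m) = q^(n*m) * (q^n * (1 - q^m * q^(Suc l))) * (R n * R m)"
    using QD[of n "Suc m", unfolded P2 e3 e4] by (simp only: mult_ac)
  have "Q * (Dm q l n m + Dm q l m (Suc n)) =
     q^(n*m) * ((1 - q^m) + q^m * (1 - q^n * q^(Suc l))) * (R n * R m)"
    unfolding distrib_left d1 d3 by (simp add: algebra_simps)
  also have "\<dots> = q^(n*m) * ((1 - q^n) + q^n * (1 - q^m * q^(Suc l))) * (R n * R m)"
    by (simp add: algebra_simps)
  also have "\<dots> = Q * (Dm q l m n + Dm q l n (Suc m))"
    unfolding distrib_left d2 d4 by (simp add: algebra_simps)
  finally show ?thesis unfolding Q_def .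
qed

lemma Am_sym:
  fixes q :: "'a::idom"
  assumes nz: "(\<Prod>i<l. 1 - q^(i+1)) \<noteq> 0"
  shows "Am q l m n = Am q l n m"
proof (induction m arbitrary: n)
  case 0
  then show ?case by (simp add: Am_0 Am_0')
next
  case (Suc m)
  note outer = Suc.IH
  show ?case
  proof (induction n)
    case 0
    then show ?case by (simp add: Am_0 Am_0')
  next
    case (Suc n)
    have D: "Dm q l n m + Dm q l m (Suc n) = Dm q l m n + Dm q l n (Suc m)"
      using D_ident[where q=q and l=l and n=n and m=m] nz by simp
    have "Am q l (Suc m) (Suc n) = Am q l m n + (Dm q l n m + Dm q l m (Suc n))"
      using outer[of "Suc n"] outer[of n] by (simp add: Am_Suc algebra_simps)
    also have "\<dots> = Am q l m n + (Dm q l m n + Dm q l n (Suc m))" using D by simp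
    also have "\<dots> = Am q l (Suc n) (Suc m)"
      using Suc.IH by (simp add: Am_Suc algebra_simps)
    finally show ?case .
  qed
qed

lemma a_coeff_Am: "a_coeff m n l = Am [:0,1:] l m n"
proof -
  have pl: "prod_list (map (\<lambda>x. 1 - x) (Lst q n L)) = (\<Prod>i<L. 1 - q^(n+i))" for q :: "int poly" and L
    by (induction L) (simp_all add: Lst_def)
  have len: "length (Lst ([:0,1:]::int poly) n (Suc l)) = Suc l" by (simp add: Lst_def)
  have "a_coeff m n l = p_poly m (Lst [:0,1:] n (Suc l))"
    unfolding a_coeff_def Lst_def ..
  also have "\<dots> = Am [:0,1:] l m n"
    unfolding p_poly_def Am_def Pn_def pl
    using S_T[of "Lst ([:0,1:]::int poly) n (Suc l)" m] len by simp
  finally show ?thesis .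
qed

lemma nz: "(\<Prod>i<l. 1 - ([:0,1:]::int poly)^(i+1)) \<noteq> 0"
proof -
  have "poly (1 - ([:0,1:]::int poly)^(i+1)) 0 \<noteq> 0" for i by simp
  then have "1 - ([:0,1:]::int poly)^(i+1) \<noteq> 0" for i by (metis poly_0)
  then show ?thesis by (simp add: prod_zero_iff)
qed

theorem lemma6p1:
  fixes m n l :: nat
  shows "a_coeff m n l = a_coeff n m l"
  using Am_sym[OF nz] by (simp add: a_coeff_Am)

end
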